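(* Let $\Sigma$ be a finite set with $n$ elements and $\mathcal{R}$ a reflexive symmetric relation on $\Sigma$, and let $\mathcal{G}$ be the simple graph on $\Sigma$ whose edges are the pairs $\{a,b\}$, $a\neq b$, with $(a,b)\in\mathcal{R}$. Then $\mathcal{G}$ is chordal if and only if there exists an enumeration $a_1,\dots,a_n$ of $\Sigma$ such that for all $1\leqslant k<\ell\leqslant n$, either $a_k\in\mathscr{L}(a_\ell)$, or $C_k\cap\mathscr{L}(a_\ell)=\emptyset$, where $C_k$ is the connected component of $a_k$ in the subgraph of $\mathcal{G}$ induced by $\{a_1,\dots,a_k\}$.
   Context: $\mathscr{L}(a)=\{b\in\Sigma:(a,b)\in\mathcal{R}\}$ (so $a\in\mathscr{L}(a)$). A graph is chordal if it has no induced cycle of length $4$ or more. (In the paper, the stated condition on the enumeration is exactly the condition under which the rejection sampling procedures Algorithms 2 and 4 never reject.) *)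

theory Defs
  imports Main
begin

definition nbhd :: "'a set \<Rightarrow> ('a \<times> 'a) set \<Rightarrow> 'a \<Rightarrow> 'a set" where
  "nbhd \<Sigma> R a = {b \<in> \<Sigma>. (a, b) \<in> R}"

definition adj :: "('a \<times> 'a) set \<Rightarrow> 'a \<Rightarrow> 'a \<Rightarrow> bool" where
  "adj R a b \<longleftrightarrow> a \<noteq> b \<and> (a, b) \<in> R"

definition induced_cycle :: "'a set \<Rightarrow> ('a \<times> 'a) set \<Rightarrow> 'a list \<Rightarrow> bool" where
  "induced_cycle \<Sigma> R vs \<longleftrightarrow>
     length vs \<ge> 4 \<and> distinct vs \<and> set vs \<subseteq> \<Sigma> \<and>
     (\<forall>i < length vs. \<forall>j < length vs.
        adj R (vs ! i) (vs ! j) \<longleftrightarrow>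
          (j = (i + 1) mod length vs \<or> i = (j + 1) mod length vs))"

definition chordal :: "'a set \<Rightarrow> ('a \<times> 'a) set \<Rightarrow> bool" where
  "chordal \<Sigma> R \<longleftrightarrow> \<not> (\<exists>vs. induced_cycle \<Sigma> R vs)"

definition component :: "('a \<times> 'a) set \<Rightarrow> 'a set \<Rightarrow> 'a \<Rightarrow> 'a set" where
  "component R S x =
     (if x \<in> S then {y. (x, y) \<in> {(u, v). u \<in> S \<and> v \<in> S \<and> adj R u v}\<^sup>*} else {})"

end

theory Submission
  imports Defs
begin


definition EE :: "('a \<times> 'a) set \<Rightarrow> 'a set \<Rightarrow> ('a \<times> 'a) set" where
  "EE R S = {(u, v). u \<in> S \<and> v \<in> S \<and> adj R u v}"

lemma component_alt: "component R S x = (if x \<in> S then {y. (x, y) \<in> (EE R S)\<^sup>*} else {})"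
  by (simp add: component_def EE_def)

lemma adj_sym: "sym R \<Longrightarrow> adj R a b \<longleftrightarrow> adj R b a"
  by (auto simp: adj_def dest: symD)

lemma adj_irrefl: "\<not> adj R a a" by (simp add: adj_def)

lemma EE_conv: "sym R \<Longrightarrow> (a, b) \<in> (EE R S)\<^sup>* \<Longrightarrow> (b, a) \<in> (EE R S)\<^sup>*"
proof -
  assume s: "sym R" and h: "(a, b) \<in> (EE R S)\<^sup>*"
  have "(EE R S)\<inverse> = EE R S" using adj_sym[OF s] by (auto simp: EE_def)
  with rtrancl_converseI[OF h] show ?thesis by simp
qed

lemma EE_mono: "S \<subseteq> T \<Longrightarrow> (a, b) \<in> (EE R S)\<^sup>* \<Longrightarrow> (a, b) \<in> (EE R T)\<^sup>*"
proof -
  assume "S \<subseteq> T" "(a, b) \<in> (EE R S)\<^sup>*"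
  moreover have "EE R S \<subseteq> EE R T" using \<open>S \<subseteq> T\<close> by (auto simp: EE_def)
  ultimately show ?thesis using rtrancl_mono by blast
qed

lemma EE_in: "(a, b) \<in> (EE R S)\<^sup>* \<Longrightarrow> a \<in> S \<Longrightarrow> b \<in> S"
  by (induction rule: rtrancl_induct) (auto simp: EE_def)

lemma mod_neq: "(a::nat) < b \<Longrightarrow> b < a + L \<Longrightarrow> a mod L \<noteq> b mod L"
proof
  assume h: "a < b" "b < a + L" "a mod L = b mod L"
  then have "L dvd b - a" using mod_eq_dvd_iff_nat[of a b L] by simp
  moreover have "0 < b - a" "b - a < L" using h by auto
  ultimately show False using dvd_imp_le by fastforce
qed

lemma mod_neq2: "(a::nat) < b \<Longrightarrow> b < a + L \<Longrightarrow> b mod L \<noteq> a mod L"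
  using mod_neq by metis

lemma cyc_adj:
  assumes "induced_cycle \<Sigma> R vs"
  shows "adj R (vs ! (a mod length vs)) (vs ! (b mod length vs)) \<longleftrightarrow>
     (b mod length vs = Suc a mod length vs \<or> a mod length vs = Suc b mod length vs)"
proof -
  have L: "length vs > 0" using assms by (auto simp: induced_cycle_def)
  show ?thesis using assms[unfolded induced_cycle_def] L
    by (auto simp: mod_Suc_eq)
qed

lemma cyc_eq:
  assumes "induced_cycle \<Sigma> R vs"
  shows "vs ! (a mod length vs) = vs ! (b mod length vs) \<longleftrightarrow> a mod length vs = b mod length vs"
proof -
  have L: "length vs > 0" and d: "distinct vs" using assms by (auto simp: induced_cycle_def)
  show ?thesis using nth_eq_iff_index_eq[OF d] L by simp
qed

lemma walk_conn:
  assumes "\<forall>t. adj R (f t) (f (Suc t))" "d < n"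
  shows "(f s, f (s + d)) \<in> (EE R (f ` {s..<s+n}))\<^sup>*"
  using assms(2)
proof (induction d)
  case 0 then show ?case by simp
next
  case (Suc d)
  then have "(f s, f (s + d)) \<in> (EE R (f ` {s..<s+n}))\<^sup>*" by simp
  moreover have "(f (s + d), f (s + Suc d)) \<in> EE R (f ` {s..<s+n})"
    using Suc.prems assms(1) by (auto simp: EE_def)
  ultimately show ?case by (rule rtrancl_into_rtrancl)
qed

definition good :: "'a set \<Rightarrow> ('a \<times> 'a) set \<Rightarrow> 'a list \<Rightarrow> bool" where
  "good \<Sigma> R as \<longleftrightarrow> distinct as \<and> set as = \<Sigma> \<and>
       (\<forall>k l. k < l \<and> l < length as \<longrightarrow>
          as ! k \<in> nbhd \<Sigma> R (as ! l) \<or>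
          component R (set (take (Suc k) as)) (as ! k) \<inter> nbhd \<Sigma> R (as ! l) = {})"

lemma key:
  assumes g: "good \<Sigma> R as" and kl: "k < l" "l < length as"
    and Q: "Q \<subseteq> set (take (Suc k) as)" "as ! k \<in> Q" "\<forall>q\<in>Q. (as ! k, q) \<in> (EE R Q)\<^sup>*"
    and q1: "q1 \<in> Q" "q1 \<in> \<Sigma>" "(as ! l, q1) \<in> R"
  shows "(as ! l, as ! k) \<in> R"
proof -
  let ?S = "set (take (Suc k) as)"
  have "as ! k \<in> ?S" using Q by blast
  have "(as ! k, q1) \<in> (EE R ?S)\<^sup>*" using Q q1 EE_mono[OF Q(1)] by blast
  then have "q1 \<in> component R ?S (as ! k)" using \<open>as ! k \<in> ?S\<close> by (simp add: component_alt)
  moreover have "q1 \<in> nbhd \<Sigma> R (as ! l)" using q1 by (simp add: nbhd_def)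
  ultimately have "as ! k \<in> nbhd \<Sigma> R (as ! l)" using g kl unfolding good_def by blast
  then show ?thesis by (simp add: nbhd_def)
qed

lemma gen:
  assumes g: "good \<Sigma> R as" and s: "sym R"
    and A: "finite A" "A \<subseteq> \<Sigma>" and Aconn: "\<forall>a\<in>A. \<forall>b\<in>A. (a, b) \<in> (EE R A)\<^sup>*"
    and pos: "\<forall>q\<in>\<Sigma>. pos q < length as \<and> as ! pos q = q"
    and mx: "m \<in> \<Sigma>" "y \<in> \<Sigma>" "m \<notin> A" "y \<notin> A" "x \<in> A" "z \<in> A" "adj R y z" "adj R m x"
    and only: "\<forall>q\<in>A. adj R m q \<longrightarrow> q = x" and mmax: "\<forall>q\<in>A. pos q \<le> pos m"
    and xy: "pos x < pos y" "\<not> adj R x y"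
  shows False
proof -
  have ne: "A \<noteq> {}" using mx by auto
  define M where "M = Max (pos ` A)"
  have "M \<in> pos ` A" unfolding M_def using A ne by simp
  then obtain gg where gg: "gg \<in> A" "pos gg = M" by auto
  have gmax: "\<forall>q\<in>A. pos q \<le> pos gg" using gg A unfolding M_def by simp
  have "gg \<noteq> m" using gg mx by auto
  moreover have "as ! pos gg = gg" "as ! pos m = m" using pos gg A mx by auto
  ultimately have "pos gg \<noteq> pos m" by metis
  then have lt: "pos gg < pos m" using mmax gg by fastforce
  have sub: "\<And>k. \<forall>q\<in>A. pos q \<le> k \<Longrightarrow> A \<subseteq> set (take (Suc k) as)"
  proof
    fix k q assume a: "\<forall>q\<in>A. pos q \<le> k" "q \<in> A"
    then have "pos q < Suc k" using le_imp_less_Suc by blast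
    moreover have "pos q < length as" "as ! pos q = q" using pos A a(2) by auto
    ultimately show "q \<in> set (take (Suc k) as)"
      by (metis in_set_conv_nth length_take min_less_iff_conj nth_take)
  qed
  have "(as ! pos m, as ! pos gg) \<in> R"
  proof (rule key[OF g lt])
    show "pos m < length as" using pos mx by auto
    show "A \<subseteq> set (take (Suc (pos gg)) as)" using sub gmax by blast
    show "as ! pos gg \<in> A" using pos gg A by auto
    show "\<forall>q\<in>A. (as ! pos gg, q) \<in> (EE R A)\<^sup>*" using Aconn \<open>as ! pos gg \<in> A\<close> by blast
    show "x \<in> A" "x \<in> \<Sigma>" using mx A by auto
    show "(as ! pos m, x) \<in> R" using mx pos by (auto simp: adj_def)
  qed
  then have "adj R m gg" using pos mx gg A \<open>gg \<noteq> m\<close> by (auto simp: adj_def)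
  then have "gg = x" using only gg by blast
  have "(as ! pos y, as ! pos x) \<in> R"
  proof (rule key[OF g xy(1)])
    show "pos y < length as" using pos mx by auto
    show "A \<subseteq> set (take (Suc (pos x)) as)" using sub gmax \<open>gg = x\<close> by blast
    show "as ! pos x \<in> A" using pos mx A by auto
    show "\<forall>q\<in>A. (as ! pos x, q) \<in> (EE R A)\<^sup>*" using Aconn \<open>as ! pos x \<in> A\<close> by blast
    show "z \<in> A" "z \<in> \<Sigma>" using mx A by auto
    show "(as ! pos y, z) \<in> R" using mx pos by (auto simp: adj_def)
  qed
  then have "adj R y x" using pos mx A by (auto simp: adj_def)
  then show False using xy adj_sym[OF s] by blast
qed

lemma back_dir:
  assumes g: "good \<Sigma> R as" and s: "sym R" and cyc: "induced_cycle \<Sigma> R vs"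
  shows False
proof -
  define L where "L = length vs"
  have L4: "L \<ge> 4" and vsS: "set vs \<subseteq> \<Sigma>" using cyc by (auto simp: induced_cycle_def L_def)
  define c where "c = (\<lambda>t. vs ! (t mod L))"
  have cadj: "\<And>a b. adj R (c a) (c b) \<longleftrightarrow> (b mod L = Suc a mod L \<or> a mod L = Suc b mod L)"
    using cyc_adj[OF cyc] unfolding c_def L_def by blast
  have ceq: "\<And>a b. c a = c b \<longleftrightarrow> a mod L = b mod L"
    using cyc_eq[OF cyc] unfolding c_def L_def by blast
  have cvs: "\<And>t. c t \<in> set vs" unfolding c_def L_def using L4 L_def by (intro nth_mem mod_less_divisor) linarith
  have cS: "\<And>t. c t \<in> \<Sigma>" using vsS cvs by blast
  have cstep: "\<forall>t. adj R (c t) (c (Suc t))" using cadj by simp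
  have cL: "\<And>t. c (t + L) = c t" unfolding c_def by simp
  define pos where "pos q = (SOME k. k < length as \<and> as ! k = q)" for q
  have pos: "\<forall>q\<in>\<Sigma>. pos q < length as \<and> as ! pos q = q"
  proof
    fix q assume "q \<in> \<Sigma>"
    then have "\<exists>k. k < length as \<and> as ! k = q" using g by (auto simp: good_def in_set_conv_nth)
    then show "pos q < length as \<and> as ! pos q = q" unfolding pos_def by (rule someI_ex)
  qed
  have posinj: "\<And>a b. a \<in> \<Sigma> \<Longrightarrow> b \<in> \<Sigma> \<Longrightarrow> pos a = pos b \<Longrightarrow> a = b" using pos by metis
  define M where "M = Max (pos ` set vs)"
  have "vs \<noteq> []" using L4 L_def by auto
  then have "M \<in> pos ` set vs" unfolding M_def by simp
  then obtain m where m: "m \<in> set vs" "pos m = M" by auto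
  have mmax0: "\<forall>q\<in>set vs. pos q \<le> pos m" using m unfolding M_def by simp
  obtain i where i: "i < L" "vs ! i = m" using m(1) by (auto simp: in_set_conv_nth L_def)
  have mc: "m = c i" using i unfolding c_def by simp
  have mmax: "\<And>t. pos (c t) \<le> pos m" using mmax0 cvs by blast
  define u where "u = c (Suc i)"
  define w where "w = c (i + L - 1)"
  have uw: "u \<noteq> w" unfolding u_def w_def ceq by (rule mod_neq; use L4 in linarith)
  have Aconn: "\<forall>a\<in>c ` {s..<s+(L-2)}. \<forall>b\<in>c ` {s..<s+(L-2)}. (a, b) \<in> (EE R (c ` {s..<s+(L-2)}))\<^sup>*" for s
  proof (intro ballI)
    fix a b assume a: "a \<in> c ` {s..<s+(L-2)}" and b: "b \<in> c ` {s..<s+(L-2)}"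
    from a obtain t1 where t1: "t1 \<in> {s..<s+(L-2)}" "a = c t1" by blast
    from b obtain t2 where t2: "t2 \<in> {s..<s+(L-2)}" "b = c t2" by blast
    have e1: "a = c (s + (t1 - s))" "t1 - s < L - 2" using t1 by auto
    have e2: "b = c (s + (t2 - s))" "t2 - s < L - 2" using t2 by auto
    have "(c s, a) \<in> (EE R (c ` {s..<s+(L-2)}))\<^sup>*"
      unfolding e1(1) by (rule walk_conn[OF cstep e1(2)])
    then have 1: "(a, c s) \<in> (EE R (c ` {s..<s+(L-2)}))\<^sup>*" by (rule EE_conv[OF s])
    have 2: "(c s, b) \<in> (EE R (c ` {s..<s+(L-2)}))\<^sup>*"
      unfolding e2(1) by (rule walk_conn[OF cstep e2(2)])
    show "(a, b) \<in> (EE R (c ` {s..<s+(L-2)}))\<^sup>*" using 1 2 by (rule rtrancl_trans)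
  qed
  have notin: "c a \<notin> c ` {lo..<hi}"
    if h: "\<And>t. lo \<le> t \<Longrightarrow> t < hi \<Longrightarrow> (a < t \<and> t < a + L) \<or> (t < a \<and> a < t + L)" for a lo hi
  proof
    assume "c a \<in> c ` {lo..<hi}"
    then obtain t where t: "lo \<le> t" "t < hi" "c a = c t" by auto
    then have "a mod L = t mod L" using ceq by simp
    moreover have "a mod L \<noteq> t mod L" using h[OF t(1,2)] mod_neq[of a t L] mod_neq[of t a L] by auto
    ultimately show False by simp
  qed
  have Afin: "finite (c ` {s..<s+(L-2)})" for s by simp
  have AS: "c ` {s..<s+(L-2)} \<subseteq> \<Sigma>" for s using cS by auto
  show False
  proof (cases "pos u < pos w")
    case True
    let ?A = "c ` {Suc i..<Suc i+(L-2)}"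
    show False
    proof (rule gen[OF g s Afin AS Aconn pos, where m=m and y=w and x=u and z="c (i + L - 2)"])
      show "m \<in> \<Sigma>" "w \<in> \<Sigma>" using mc w_def cS by auto
      show "m \<notin> ?A" unfolding mc by (rule notin) auto
      show "w \<notin> ?A" unfolding w_def using L4 by (intro notin) auto
      show "u \<in> ?A" unfolding u_def by (intro imageI; use L4 in auto)
      show "c (i + L - 2) \<in> ?A" by (intro imageI; use L4 in auto)
      have "Suc (i + L - 2) = i + L - 1" using L4 by simp
      then show "adj R w (c (i + L - 2))" unfolding w_def using cstep adj_sym[OF s] by metis
      show "adj R m u" unfolding mc u_def using cstep by blast
      show "\<forall>q\<in>?A. adj R m q \<longrightarrow> q = u"
      proof (intro ballI impI)
        fix q assume "q \<in> ?A" "adj R m q"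
        then obtain t where t: "Suc i \<le> t" "t < Suc i + (L - 2)" "q = c t" by auto
        have "i mod L = (i + L) mod L" by simp
        moreover have lt1: "Suc t < i + L" "i + L < Suc t + L" using t L4 by linarith+
        then have "(i + L) mod L \<noteq> Suc t mod L" using mod_neq[OF lt1] by metis
        ultimately show "q = u" using \<open>adj R m q\<close> t unfolding mc u_def by (auto simp: cadj ceq)
      qed
      show "\<forall>q\<in>?A. pos q \<le> pos m" using mmax by auto
      show "pos u < pos w" by fact
      have "(i + L - 1) mod L \<noteq> Suc (Suc i) mod L" by (rule mod_neq2; use L4 in linarith)
      moreover have "Suc i mod L \<noteq> Suc (i + L - 1) mod L" by (rule mod_neq; use L4 in linarith)
      ultimately show "\<not> adj R u w" unfolding u_def w_def cadj by simp
    qed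
  next
    case False
    then have lt: "pos w < pos u" using uw posinj[of u w] cS u_def w_def by fastforce
    let ?A = "c ` {Suc (Suc i)..<Suc (Suc i)+(L-2)}"
    show False
    proof (rule gen[OF g s Afin AS Aconn pos, where m=m and y=u and x=w and z="c (Suc (Suc i))"])
      show "m \<in> \<Sigma>" "u \<in> \<Sigma>" using mc u_def cS by auto
      show "m \<notin> ?A" unfolding mc using L4 by (intro notin) auto
      show "u \<notin> ?A" unfolding u_def using L4 by (intro notin) auto
      show "w \<in> ?A" unfolding w_def by (intro imageI; use L4 in auto)
      show "c (Suc (Suc i)) \<in> ?A" by (intro imageI; use L4 in auto)
      show "adj R u (c (Suc (Suc i)))" unfolding u_def using cstep by blast
      have "Suc (i + L - 1) = i + L" using L4 by simp
      then have "adj R w m" unfolding w_def mc using cstep cL by (metis add.commute)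
      then show "adj R m w" using adj_sym[OF s] by blast
      show "\<forall>q\<in>?A. adj R m q \<longrightarrow> q = w"
      proof (intro ballI impI)
        fix q assume "q \<in> ?A" "adj R m q"
        then obtain t where t: "Suc (Suc i) \<le> t" "t < Suc (Suc i) + (L - 2)" "q = c t" by auto
        have "t mod L \<noteq> Suc i mod L" by (rule mod_neq2; use t L4 in linarith)
        moreover have "i mod L = (i + L) mod L" by simp
        moreover have "Suc t \<noteq> i + L \<Longrightarrow> (i + L) mod L \<noteq> Suc t mod L"
          using t by (intro mod_neq2) linarith+
        ultimately have "Suc t = i + L" using \<open>adj R m q\<close> t unfolding mc by (auto simp: cadj)
        then have "t = i + L - 1" by linarith
        then show "q = w" unfolding w_def t(3) by simp
      qed
      show "\<forall>q\<in>?A. pos q \<le> pos m" using mmax by auto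
      show "pos w < pos u" by fact
      have "(i + L - 1) mod L \<noteq> Suc (Suc i) mod L" by (rule mod_neq2; use L4 in linarith)
      moreover have "Suc i mod L \<noteq> Suc (i + L - 1) mod L" by (rule mod_neq; use L4 in linarith)
      ultimately show "\<not> adj R w u" unfolding u_def w_def cadj by simp
    qed
  qed
qed



fun walk :: "('a \<times> 'a) set \<Rightarrow> 'a list \<Rightarrow> bool" where
  "walk R [] = True"
| "walk R [x] = True"
| "walk R (x # y # r) = (adj R x y \<and> walk R (y # r))"

lemma walk_append: "walk R (xs @ ys) \<longleftrightarrow> walk R xs \<and> walk R ys \<and> (xs \<noteq> [] \<longrightarrow> ys \<noteq> [] \<longrightarrow> adj R (last xs) (hd ys))"
proof (induction R xs rule: walk.induct)
  case (2 R x) then show ?case by (cases ys) auto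
qed auto

lemma walk_nth: "walk R p \<Longrightarrow> Suc i < length p \<Longrightarrow> adj R (p ! i) (p ! Suc i)"
proof (induction R p arbitrary: i rule: walk.induct)
  case (3 R x y r) then show ?case by (cases i) auto
qed auto

lemma walk_take: "walk R p \<Longrightarrow> walk R (take n p)"
  using walk_append[of R "take n p" "drop n p"] by simp
lemma walk_drop: "walk R p \<Longrightarrow> walk R (drop n p)"
  using walk_append[of R "take n p" "drop n p"] by simp

lemma walk_exists:
  assumes "(d1, d2) \<in> (EE R D)\<^sup>*" "d1 \<in> D"
  shows "\<exists>q. q \<noteq> [] \<and> hd q = d1 \<and> last q = d2 \<and> set q \<subseteq> D \<and> walk R q"
  using assms
proof (induction rule: rtrancl_induct)
  case base then show ?case by (intro exI[of _ "[d1]"]) auto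
next
  case (step y z)
  then obtain q where q: "q \<noteq> []" "hd q = d1" "last q = y" "set q \<subseteq> D" "walk R q" by blast
  show ?case
  proof (intro exI[of _ "q @ [z]"] conjI)
    show "walk R (q @ [z])" using q step(2) by (auto simp: walk_append EE_def)
    show "set (q @ [z]) \<subseteq> D" using q step(2) by (auto simp: EE_def)
  qed (use q in auto)
qed

lemma suc_mod_cases: "(i::nat) < L \<Longrightarrow> Suc i mod L = (if Suc i = L then 0 else Suc i)"
  by (cases "Suc i = L") auto

lemma cyc_make:
  assumes s: "sym R" and in\<Sigma>: "v \<in> \<Sigma>" "t1 \<in> \<Sigma>" "t2 \<in> \<Sigma>" "D \<subseteq> \<Sigma>"
    and vt: "adj R v t1" "adj R v t2" "t1 \<noteq> t2" "\<not> adj R t1 t2"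
    and d: "d1 \<in> D" "d2 \<in> D" "adj R t1 d1" "adj R t2 d2" "(d1, d2) \<in> (EE R D)\<^sup>*"
    and Dout: "\<forall>x\<in>D. x \<noteq> v \<and> \<not> adj R v x"
  shows "\<exists>vs. induced_cycle \<Sigma> R vs"
proof -
  define ok where "ok p \<longleftrightarrow> p \<noteq> [] \<and> hd p = t1 \<and> last p = t2 \<and> set p \<subseteq> D \<union> {t1, t2} \<and> walk R p" for p
  obtain q where q: "q \<noteq> []" "hd q = d1" "last q = d2" "set q \<subseteq> D" "walk R q"
    using walk_exists[OF d(5,1)] by blast
  have w1: "walk R (q @ [t2])" using q d adj_sym[OF s, of t2 d2] by (simp add: walk_append)
  have "adj R d2 t2" using adj_sym[OF s] d by blast
  then have "walk R ([t1] @ (q @ [t2]))" unfolding walk_append using w1 q d by simp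
  then have "ok (t1 # q @ [t2])"
    unfolding ok_def using q d by auto
  then obtain p where p: "ok p" and pmin: "\<And>p'. ok p' \<Longrightarrow> length p \<le> length p'"
    using ex_has_least_nat[of ok _ length] by blast
  define n where "n = length p"
  have plast: "last p = t2" using p unfolding ok_def by simp
  have pne: "p \<noteq> []" and p0: "p ! 0 = t1" and pl: "p ! (n - 1) = t2" and pset: "set p \<subseteq> D \<union> {t1, t2}"
    and pw: "walk R p"
    using p unfolding ok_def n_def by (auto simp: hd_conv_nth last_conv_nth)
  have n1: "n \<ge> 1" using pne n_def by (cases p) auto
  have step: "\<And>a. Suc a < n \<Longrightarrow> adj R (p ! a) (p ! Suc a)" using walk_nth[OF pw] n_def by blast
  have noeq: "p ! a \<noteq> p ! b" if ab: "a < b" "b < n" for a b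
  proof
    assume eq: "p ! a = p ! b"
    define p' where "p' = take a p @ drop b p"
    have "ok p'"
      unfolding ok_def
    proof (intro conjI)
      show "p' \<noteq> []" using ab n_def p'_def by simp
      show "hd p' = t1"
      proof (cases a)
        case 0 then show ?thesis using eq ab p0 n_def p'_def by (simp add: hd_drop_conv_nth)
      next
        case (Suc a') then show ?thesis using ab p0 n_def p'_def pne by (simp add: hd_conv_nth nth_append)
      qed
      show "last p' = t2" using ab plast n_def p'_def by (simp add: last_append)
      show "set p' \<subseteq> D \<union> {t1, t2}" using pset p'_def set_take_subset set_drop_subset by fastforce
      have "walk R (take a p @ drop b p)"
      proof (cases a)
        case 0 then show ?thesis using walk_drop[OF pw] by simp
      next
        case (Suc a')
        have "last (take a p) = p ! a'" using Suc ab n_def by (simp add: take_Suc_conv_app_nth)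
        moreover have "hd (drop b p) = p ! b" using ab n_def by (simp add: hd_drop_conv_nth)
        moreover have "adj R (p ! a') (p ! a)" using step[of a'] Suc ab by simp
        ultimately show ?thesis using walk_take[OF pw] walk_drop[OF pw] eq Suc ab n_def
          by (auto simp: walk_append)
      qed
      then show "walk R p'" by (simp add: p'_def)
    qed
    moreover have "length p' < n" using ab n_def p'_def by simp
    ultimately show False using pmin n_def by fastforce
  qed
  have noadj: "\<not> adj R (p ! a) (p ! b)" if ab: "Suc a < b" "b < n" for a b
  proof
    assume ad: "adj R (p ! a) (p ! b)"
    define p' where "p' = take (Suc a) p @ drop b p"
    have "ok p'"
      unfolding ok_def
    proof (intro conjI)
      show "p' \<noteq> []" using ab n_def p'_def by simp
      show "hd p' = t1" using ab p0 n_def p'_def pne by (simp add: hd_conv_nth nth_append)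
      show "last p' = t2" using ab plast n_def p'_def by (simp add: last_append)
      show "set p' \<subseteq> D \<union> {t1, t2}" using pset p'_def set_take_subset set_drop_subset by fastforce
      have "last (take (Suc a) p) = p ! a" using ab n_def by (simp add: take_Suc_conv_app_nth)
      moreover have "hd (drop b p) = p ! b" using ab n_def by (simp add: hd_drop_conv_nth)
      ultimately show "walk R p'" using walk_take[OF pw] walk_drop[OF pw] ad ab n_def p'_def
        by (auto simp: walk_append)
    qed
    moreover have "length p' < n" using ab n_def p'_def by simp
    ultimately show False using pmin n_def by fastforce
  qed
  have n3: "n \<ge> 3"
  proof (rule ccontr)
    assume "\<not> n \<ge> 3"
    moreover have "n \<noteq> 1" using p0 pl vt(3) by auto
    moreover have "n \<noteq> 2" using step[of 0] p0 pl vt(4) by auto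
    ultimately show False using n1 by linarith
  qed
  have F1: "adj R v (p ! a) \<longleftrightarrow> (a = 0 \<or> a = n - 1)" if "a < n" for a
  proof
    assume av: "adj R v (p ! a)"
    show "a = 0 \<or> a = n - 1"
    proof (rule ccontr)
      assume na: "\<not> (a = 0 \<or> a = n - 1)"
      have "p ! a \<noteq> t1" using noeq[of 0 a] na that p0 by auto
      moreover have "a < n - 1" "n - 1 < n" using na that by linarith+
      then have "p ! a \<noteq> t2" using noeq[of a "n - 1"] pl by auto
      moreover have "p ! a \<in> set p" using that n_def by simp
      ultimately have "p ! a \<in> D" using pset by auto
      then show False using Dout av by auto
    qed
  qed (use p0 pl vt in auto)
  have F2: "adj R (p ! a) (p ! b) \<longleftrightarrow> (b = Suc a \<or> a = Suc b)" if "a < n" "b < n" for a b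
  proof
    assume "adj R (p ! a) (p ! b)"
    then show "b = Suc a \<or> a = Suc b"
      using noadj[of a b] noadj[of b a] adj_sym[OF s] adj_irrefl that
      by (metis Suc_lessI linorder_neqE_nat)
  next
    assume "b = Suc a \<or> a = Suc b"
    then show "adj R (p ! a) (p ! b)" using step that adj_sym[OF s] by auto
  qed
  have vnot: "v \<notin> set p"
  proof
    assume "v \<in> set p"
    then have "v \<in> D \<or> v = t1 \<or> v = t2" using pset by auto
    then show False using Dout vt adj_irrefl by metis
  qed
  have dp: "distinct p" unfolding distinct_conv_nth n_def[symmetric]
    using noeq by (metis linorder_neqE_nat)
  have "induced_cycle \<Sigma> R (v # p)"
    unfolding induced_cycle_def
  proof (intro conjI allI impI)
    show "4 \<le> length (v # p)" using n3 n_def by simp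
    show "distinct (v # p)" using dp vnot by simp
    show "set (v # p) \<subseteq> \<Sigma>" using pset in\<Sigma> by auto
    fix i j assume ij: "i < length (v # p)" "j < length (v # p)"
    then have ij': "i < Suc n" "j < Suc n" using n_def by auto
    show "adj R ((v # p) ! i) ((v # p) ! j) \<longleftrightarrow> (j = (i + 1) mod length (v # p) \<or> i = (j + 1) mod length (v # p))"
      unfolding length_Cons n_def[symmetric] Suc_eq_plus1[symmetric] suc_mod_cases[OF ij'(1)] suc_mod_cases[OF ij'(2)]
    proof (cases i; cases j)
      fix a b assume "i = Suc a" "j = Suc b"
      then show "adj R ((v # p) ! i) ((v # p) ! j) = (j = (if Suc i = Suc n then 0 else Suc i) \<or> i = (if Suc j = Suc n then 0 else Suc j))"
        using F2[of a b] ij' by auto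
    next
      fix b assume "i = 0" "j = Suc b"
      then show "adj R ((v # p) ! i) ((v # p) ! j) = (j = (if Suc i = Suc n then 0 else Suc i) \<or> i = (if Suc j = Suc n then 0 else Suc j))"
        using F1[of b] ij' n3 by auto
    next
      fix a assume "i = Suc a" "j = 0"
      then show "adj R ((v # p) ! i) ((v # p) ! j) = (j = (if Suc i = Suc n then 0 else Suc i) \<or> i = (if Suc j = Suc n then 0 else Suc j))"
        using F1[of a] ij' n3 adj_sym[OF s] by auto
    next
      assume "i = 0" "j = 0"
      then show "adj R ((v # p) ! i) ((v # p) ! j) = (j = (if Suc i = Suc n then 0 else Suc i) \<or> i = (if Suc j = Suc n then 0 else Suc j))"
        using n3 by (auto simp: adj_def)
    qed
  qed
  then show ?thesis by blast
qed



definition simplicial :: "'a set \<Rightarrow> ('a \<times> 'a) set \<Rightarrow> 'a \<Rightarrow> bool" where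
  "simplicial \<Sigma> R s \<longleftrightarrow> s \<in> \<Sigma> \<and> (\<forall>x\<in>\<Sigma>. \<forall>y\<in>\<Sigma>. adj R s x \<longrightarrow> adj R s y \<longrightarrow> x \<noteq> y \<longrightarrow> adj R x y)"

lemma chordal_mono: "chordal \<Sigma> R \<Longrightarrow> \<Sigma>' \<subseteq> \<Sigma> \<Longrightarrow> chordal \<Sigma>' R"
  unfolding chordal_def induced_cycle_def by blast

lemma comp_closed:
  assumes "(u, y) \<in> (EE R W)\<^sup>*"
  shows "(u, y) \<in> (EE R {z. (u, z) \<in> (EE R W)\<^sup>*})\<^sup>*"
  using assms
proof (induction rule: rtrancl_induct)
  case base then show ?case by simp
next
  case (step y z)
  have "(u, z) \<in> (EE R W)\<^sup>*" using step(1,2) by (rule rtrancl_into_rtrancl)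
  then have "(y, z) \<in> EE R {z. (u, z) \<in> (EE R W)\<^sup>*}" using step(1,2) by (auto simp: EE_def)
  with step.IH show ?case by (rule rtrancl_into_rtrancl)
qed

lemma dirac:
  assumes fin: "finite \<Sigma>" and s: "sym R"
  shows "chordal \<Sigma> R \<longrightarrow> (\<Sigma> \<noteq> {} \<longrightarrow> (\<exists>x. simplicial \<Sigma> R x)) \<and>
     (\<forall>v\<in>\<Sigma>. (\<exists>u\<in>\<Sigma>. u \<noteq> v \<and> \<not> adj R v u) \<longrightarrow> (\<exists>x. simplicial \<Sigma> R x \<and> x \<noteq> v \<and> \<not> adj R v x))"
  using fin
proof (induction \<Sigma> rule: finite_psubset_induct)
  case (psubset A)
  show ?case
  proof
    assume ch: "chordal A R"
    have IH0: "\<And>B. B \<subset> A \<Longrightarrow> B \<noteq> {} \<Longrightarrow> \<exists>x. simplicial B R x"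
      using psubset.IH ch chordal_mono by blast
    have IHQ: "\<And>B w. B \<subset> A \<Longrightarrow> w \<in> B \<Longrightarrow> (\<exists>u\<in>B. u \<noteq> w \<and> \<not> adj R w u) \<Longrightarrow>
         \<exists>x. simplicial B R x \<and> x \<noteq> w \<and> \<not> adj R w x"
      using psubset.IH ch chordal_mono by (metis psubset_imp_subset)
    have Q: "\<forall>v\<in>A. (\<exists>u\<in>A. u \<noteq> v \<and> \<not> adj R v u) \<longrightarrow> (\<exists>x. simplicial A R x \<and> x \<noteq> v \<and> \<not> adj R v x)"
    proof (intro ballI impI)
      fix v assume vA: "v \<in> A" and "\<exists>u\<in>A. u \<noteq> v \<and> \<not> adj R v u"
      then obtain u where u: "u \<in> A" "u \<noteq> v" "\<not> adj R v u" by blast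
      define W where "W = {x\<in>A. x \<noteq> v \<and> \<not> adj R v x}"
      define D where "D = {y. (u, y) \<in> (EE R W)\<^sup>*}"
      define T where "T = {t\<in>A. adj R v t \<and> (\<exists>d\<in>D. adj R t d)}"
      define H where "H = D \<union> T"
      have uW: "u \<in> W" using u W_def by simp
      have DW: "D \<subseteq> W"
      proof
        fix y assume "y \<in> D"
        then have "(u, y) \<in> (EE R W)\<^sup>*" unfolding D_def by simp
        then show "y \<in> W" using uW by (rule EE_in)
      qed
      have uD: "u \<in> D" unfolding D_def by simp
      have WA: "W \<subseteq> A" unfolding W_def by blast
      have Wc: "\<And>x. x \<in> W \<longleftrightarrow> x \<in> A \<and> x \<noteq> v \<and> \<not> adj R v x" unfolding W_def by simp
      have Hc: "\<And>x. x \<in> H \<longleftrightarrow> x \<in> D \<or> x \<in> T" unfolding H_def by simp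
      have Tc: "\<And>x. x \<in> T \<longleftrightarrow> x \<in> A \<and> adj R v x \<and> (\<exists>d\<in>D. adj R x d)" unfolding T_def by simp
      have vW: "v \<notin> W" unfolding W_def by simp
      have vT: "v \<notin> T" unfolding T_def by (simp add: adj_def)
      have vH: "v \<notin> H" unfolding H_def using vW vT DW by blast
      have TA: "T \<subseteq> A" unfolding T_def by blast
      have HA0: "H \<subseteq> A" unfolding H_def using DW WA TA by blast
      have HA: "H \<subset> A" using HA0 vH vA by blast
      have DA: "D \<subset> A" using HA0 vH vA DW vW WA by blast
      have Dconn: "\<And>a b. a \<in> D \<Longrightarrow> b \<in> D \<Longrightarrow> (a, b) \<in> (EE R D)\<^sup>*"
      proof -
        fix a b assume "a \<in> D" "b \<in> D"
        then have ua: "(u, a) \<in> (EE R W)\<^sup>*" and ub: "(u, b) \<in> (EE R W)\<^sup>*" unfolding D_def by simp_all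
        have 1: "(u, a) \<in> (EE R D)\<^sup>*" unfolding D_def using ua by (rule comp_closed)
        have 2: "(u, b) \<in> (EE R D)\<^sup>*" unfolding D_def using ub by (rule comp_closed)
        from 1 2 show "(a, b) \<in> (EE R D)\<^sup>*" using EE_conv[OF s] rtrancl_trans by metis
      qed
      have DUMMY: True by simp
      have Tcl: "\<And>t1 t2. t1 \<in> T \<Longrightarrow> t2 \<in> T \<Longrightarrow> t1 \<noteq> t2 \<Longrightarrow> adj R t1 t2"
      proof (rule ccontr)
        fix t1 t2 assume t: "t1 \<in> T" "t2 \<in> T" "t1 \<noteq> t2" "\<not> adj R t1 t2"
        then obtain d1 d2 where d: "d1 \<in> D" "d2 \<in> D" "adj R t1 d1" "adj R t2 d2"
          using Tc by blast
        have "\<exists>vs. induced_cycle A R vs"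
        proof (rule cyc_make[OF s vA])
          show "t1 \<in> A" "t2 \<in> A" "adj R v t1" "adj R v t2" using t Tc by auto
          show "D \<subseteq> A" using DA by blast
          show "(d1, d2) \<in> (EE R D)\<^sup>*" using Dconn d by blast
          show "\<forall>x\<in>D. x \<noteq> v \<and> \<not> adj R v x" using DW Wc by blast
        qed (use t d in auto)
        then show False using ch unfolding chordal_def by blast
      qed
      have Nbr: "\<And>d x. d \<in> D \<Longrightarrow> x \<in> A \<Longrightarrow> adj R d x \<Longrightarrow> x \<in> H"
      proof -
        fix d x assume dx: "d \<in> D" "x \<in> A" "adj R d x"
        show "x \<in> H"
        proof (cases "x = v \<or> adj R v x")
          case True
          have "x \<noteq> v" using dx DW Wc adj_sym[OF s] by blast
          then have "adj R v x" using True by blast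
          then show ?thesis using dx adj_sym[OF s] Hc Tc by blast
        next
          case False
          then have "x \<in> W" using dx Wc by blast
          moreover have "d \<in> W" using dx DW by blast
          ultimately have "(d, x) \<in> EE R W" using dx by (auto simp: EE_def)
          then have "x \<in> D" using dx unfolding D_def by (meson mem_Collect_eq rtrancl_into_rtrancl)
          then show ?thesis using Hc by blast
        qed
      qed
      have lift: "\<exists>x. simplicial A R x \<and> x \<noteq> v \<and> \<not> adj R v x" if sD: "x \<in> D" "simplicial H R x" for x
      proof (intro exI conjI)
        show "x \<noteq> v" "\<not> adj R v x" using sD DW Wc by auto
        show "simplicial A R x" unfolding simplicial_def
        proof (intro conjI ballI impI)
          show "x \<in> A" using sD DA by blast
          fix y z assume "y \<in> A" "z \<in> A" "adj R x y" "adj R x z" "y \<noteq> z"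
          then show "adj R y z" using Nbr[OF sD(1)] sD(2) unfolding simplicial_def by blast
        qed
      qed
      show "\<exists>x. simplicial A R x \<and> x \<noteq> v \<and> \<not> adj R v x"
      proof (cases "\<exists>w\<in>T. \<exists>h\<in>H. h \<noteq> w \<and> \<not> adj R w h")
        case True
        then obtain w where w: "w \<in> T" "\<exists>h\<in>H. h \<noteq> w \<and> \<not> adj R w h" by blast
        have "w \<in> H" using w Hc by blast
        then obtain x where x: "simplicial H R x" "x \<noteq> w" "\<not> adj R w x" using IHQ[OF HA] w by blast
        have "x \<in> H" using x unfolding simplicial_def by blast
        moreover have "x \<notin> T" using Tcl w x by blast
        ultimately have "x \<in> D" using Hc by blast
        then show ?thesis using lift x by blast
      next
        case False
        then have univ: "\<And>w h. w \<in> T \<Longrightarrow> h \<in> H \<Longrightarrow> h \<noteq> w \<Longrightarrow> adj R w h" by blast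
        obtain x where x: "simplicial D R x" using IH0[OF DA] uD by blast
        have xD: "x \<in> D" using x unfolding simplicial_def by blast
        have "simplicial H R x" unfolding simplicial_def
        proof (intro conjI ballI impI)
          show "x \<in> H" using xD Hc by blast
          fix y z assume yz: "y \<in> H" "z \<in> H" "adj R x y" "adj R x z" "y \<noteq> z"
          show "adj R y z"
          proof (cases "y \<in> T \<or> z \<in> T")
            case True
            then show ?thesis using univ yz adj_sym[OF s] by metis
          next
            case False
            then have "y \<in> D" "z \<in> D" using yz Hc by auto
            then show ?thesis using x yz unfolding simplicial_def by blast
          qed
        qed
        then show ?thesis using lift xD by blast
      qed
    qed
    have Q0: "A \<noteq> {} \<longrightarrow> (\<exists>x. simplicial A R x)"
    proof
      assume "A \<noteq> {}"
      then obtain v where vA: "v \<in> A" by blast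
      show "\<exists>x. simplicial A R x"
      proof (cases "\<exists>u\<in>A. u \<noteq> v \<and> \<not> adj R v u")
        case True then show ?thesis using Q vA by blast
      next
        case False
        then have univ: "\<And>u. u \<in> A \<Longrightarrow> u \<noteq> v \<Longrightarrow> adj R v u" by blast
        show ?thesis
        proof (cases "A - {v} = {}")
          case True
          then have "simplicial A R v" unfolding simplicial_def using vA adj_irrefl by blast
          then show ?thesis by blast
        next
          case False
          have "A - {v} \<subset> A" using vA by blast
          then obtain x where x: "simplicial (A - {v}) R x" using IH0 False by blast
          have "simplicial A R x" unfolding simplicial_def
          proof (intro conjI ballI impI)
            show "x \<in> A" using x unfolding simplicial_def by blast
            fix y z assume yz: "y \<in> A" "z \<in> A" "adj R x y" "adj R x z" "y \<noteq> z"
            show "adj R y z"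
            proof (cases "y = v \<or> z = v")
              case True
              then show ?thesis using univ yz adj_sym[OF s] by metis
            next
              case False
              then show ?thesis using x yz unfolding simplicial_def by blast
            qed
          qed
          then show ?thesis by blast
        qed
      qed
    qed
    show "(A \<noteq> {} \<longrightarrow> (\<exists>x. simplicial A R x)) \<and>
     (\<forall>v\<in>A. (\<exists>u\<in>A. u \<noteq> v \<and> \<not> adj R v u) \<longrightarrow> (\<exists>x. simplicial A R x \<and> x \<noteq> v \<and> \<not> adj R v x))"
      using Q0 Q by blast
  qed
qed



lemma comp_sub: "component R S x \<subseteq> S"
  using EE_in by (auto simp: component_alt)

lemma comp_insert:
  assumes s: "sym R" and sA: "simplicial A R s" and S': "S' \<subseteq> A" "s \<notin> S'" "g \<in> S'"
    and p: "(g, y) \<in> (EE R (insert s S'))\<^sup>*"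
  shows "(y \<in> S' \<and> (g, y) \<in> (EE R S')\<^sup>*) \<or> (y = s \<and> (\<exists>x. (g, x) \<in> (EE R S')\<^sup>* \<and> x \<in> S' \<and> adj R s x))"
  using p
proof (induction rule: rtrancl_induct)
  case base then show ?case using S' by simp
next
  case (step y z)
  have e: "y \<in> insert s S'" "z \<in> insert s S'" "adj R y z" using step(2) by (auto simp: EE_def)
  from step.IH show ?case
  proof
    assume h: "y \<in> S' \<and> (g, y) \<in> (EE R S')\<^sup>*"
    show ?case
    proof (cases "z = s")
      case True
      have "adj R s y" using e True adj_sym[OF s] by blast
      then show ?thesis using h True by blast
    next
      case False
      then have "z \<in> S'" using e by blast
      then have "(y, z) \<in> EE R S'" using h e by (auto simp: EE_def)
      then show ?thesis using h \<open>z \<in> S'\<close> by (meson rtrancl_into_rtrancl)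
    qed
  next
    assume h: "y = s \<and> (\<exists>x. (g, x) \<in> (EE R S')\<^sup>* \<and> x \<in> S' \<and> adj R s x)"
    then obtain x where x: "(g, x) \<in> (EE R S')\<^sup>*" "x \<in> S'" "adj R s x" by blast
    have zs: "z \<noteq> s" using e h by (auto simp: adj_def)
    then have zS: "z \<in> S'" using e by blast
    show ?case
    proof (cases "z = x")
      case True then show ?thesis using x by blast
    next
      case False
      have "adj R s z" using e h by blast
      then have "adj R x z" using sA x False zS S' unfolding simplicial_def by blast
      then have "(x, z) \<in> EE R S'" using x zS by (auto simp: EE_def)
      then show ?thesis using x zS by (meson rtrancl_into_rtrancl)
    qed
  qed
qed

lemma nth_notin_take: "distinct xs \<Longrightarrow> l < length xs \<Longrightarrow> n \<le> l \<Longrightarrow> xs ! l \<notin> set (take n xs)"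
  by (auto simp: in_set_conv_nth nth_eq_iff_index_eq)

lemma order_exists:
  assumes fin: "finite \<Sigma>" and s: "sym R"
  shows "chordal \<Sigma> R \<Longrightarrow> \<exists>as. good \<Sigma> R as"
  using fin
proof (induction \<Sigma> rule: finite_psubset_induct)
  case (psubset A)
  show ?case
  proof (cases "A = {}")
    case True
    then show ?thesis by (intro exI[of _ "[]"]) (simp add: good_def)
  next
    case False
    obtain sv where sv: "simplicial A R sv" using dirac[OF psubset.hyps(1) s] psubset.prems False by blast
    have svA: "sv \<in> A" using sv unfolding simplicial_def by blast
    let ?A' = "A - {sv}"
    have "?A' \<subset> A" using svA by blast
    moreover have "chordal ?A' R" using psubset.prems chordal_mono by blast
    ultimately obtain bs where bs: "good ?A' R bs" using psubset.IH by blast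
    have dbs: "distinct bs" and sbs: "set bs = ?A'" using bs unfolding good_def by auto
    have Pbs: "\<And>k l. k < l \<Longrightarrow> l < length bs \<Longrightarrow> bs ! k \<in> nbhd ?A' R (bs ! l) \<or>
          component R (set (take (Suc k) bs)) (bs ! k) \<inter> nbhd ?A' R (bs ! l) = {}"
      using bs unfolding good_def by blast
    have "good A R (sv # bs)"
      unfolding good_def
    proof (intro conjI allI impI)
      show "distinct (sv # bs)" using dbs sbs by simp
      show "set (sv # bs) = A" using sbs svA by auto
      fix k l assume kl: "k < l \<and> l < length (sv # bs)"
      show "(sv # bs) ! k \<in> nbhd A R ((sv # bs) ! l) \<or>
          component R (set (take (Suc k) (sv # bs))) ((sv # bs) ! k) \<inter> nbhd A R ((sv # bs) ! l) = {}"
      proof (cases k)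
        case 0
        have "component R (set (take (Suc k) (sv # bs))) ((sv # bs) ! k) \<subseteq> {sv}"
          using comp_sub[of R "set (take (Suc k) (sv # bs))"] 0 by simp
        then show ?thesis using 0 by auto
      next
        case (Suc k')
        then obtain l' where l': "l = Suc l'" using kl by (cases l) auto
        have kl': "k' < l'" "l' < length bs" using kl Suc l' by auto
        define S' where "S' = set (take (Suc k') bs)"
        have tk: "set (take (Suc k) (sv # bs)) = insert sv S'" using Suc S'_def by simp
        have g: "(sv # bs) ! k = bs ! k'" "(sv # bs) ! l = bs ! l'" using Suc l' by auto
        have "S' \<subseteq> set bs" unfolding S'_def by (rule set_take_subset)
        then have S'A: "S' \<subseteq> A" "sv \<notin> S'" unfolding sbs by blast+
        have gS: "bs ! k' \<in> S'" unfolding S'_def using kl' by (simp add: take_Suc_conv_app_nth)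
        have "bs ! l' \<in> set bs" using kl' by simp
        then have lA: "bs ! l' \<in> ?A'" unfolding sbs .
        have lnot: "bs ! l' \<notin> S'" unfolding S'_def using nth_notin_take[OF dbs kl'(2)] kl' by simp
        show ?thesis
        proof (rule ccontr)
          assume na: "\<not> ?thesis"
          then have n1: "bs ! k' \<notin> nbhd A R (bs ! l')" using g by simp
          have "bs ! k' \<notin> nbhd ?A' R (bs ! l')" using n1 by (auto simp: nbhd_def)
          then have C': "component R S' (bs ! k') \<inter> nbhd ?A' R (bs ! l') = {}"
            using Pbs[OF kl'] unfolding S'_def by blast
          from na obtain q where q: "q \<in> component R (insert sv S') (bs ! k')" "q \<in> nbhd A R (bs ! l')"
            using g tk by auto
          have "(bs ! k', q) \<in> (EE R (insert sv S'))\<^sup>*" using q(1) gS by (simp add: component_alt)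
          from comp_insert[OF s sv S'A gS this] show False
          proof
            assume h: "q \<in> S' \<and> (bs ! k', q) \<in> (EE R S')\<^sup>*"
            then have "q \<in> component R S' (bs ! k')" using gS by (simp add: component_alt)
            moreover have "q \<in> nbhd ?A' R (bs ! l')" using h q(2) S'A by (auto simp: nbhd_def)
            ultimately show False using C' by blast
          next
            assume h: "q = sv \<and> (\<exists>x. (bs ! k', x) \<in> (EE R S')\<^sup>* \<and> x \<in> S' \<and> adj R sv x)"
            then obtain x where x: "(bs ! k', x) \<in> (EE R S')\<^sup>*" "x \<in> S'" "adj R sv x" by blast
            have "(bs ! l', sv) \<in> R" using q(2) h by (simp add: nbhd_def)
            then have "adj R sv (bs ! l')" using lA s by (auto simp: adj_def dest: symD)
            moreover have "x \<noteq> bs ! l'" using x lnot by blast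
            ultimately have "adj R x (bs ! l')" using sv x S'A lA unfolding simplicial_def by blast
            then have "x \<in> nbhd ?A' R (bs ! l')" using x S'A s by (auto simp: nbhd_def adj_def dest: symD)
            moreover have "x \<in> component R S' (bs ! k')" using x gS by (simp add: component_alt)
            ultimately show False using C' by blast
          qed
        qed
      qed
    qed
    then show ?thesis by blast
  qed
qed

theorem proposition3p1:
  fixes \<Sigma> :: "'a set" and R :: "('a \<times> 'a) set"
  assumes "finite \<Sigma>"
    and "R \<subseteq> \<Sigma> \<times> \<Sigma>"
    and "refl_on \<Sigma> R"
    and "sym R"
  shows "chordal \<Sigma> R \<longleftrightarrow>
    (\<exists>as. distinct as \<and> set as = \<Sigma> \<and>
       (\<forall>k l. k < l \<and> l < length as \<longrightarrow>
          as ! k \<in> nbhd \<Sigma> R (as ! l) \<or>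
          component R (set (take (Suc k) as)) (as ! k) \<inter> nbhd \<Sigma> R (as ! l) = {}))"
proof
  assume "chordal \<Sigma> R"
  then obtain as where "good \<Sigma> R as" using order_exists[OF assms(1,4)] by blast
  then show "\<exists>as. distinct as \<and> set as = \<Sigma> \<and>
       (\<forall>k l. k < l \<and> l < length as \<longrightarrow>
          as ! k \<in> nbhd \<Sigma> R (as ! l) \<or>
          component R (set (take (Suc k) as)) (as ! k) \<inter> nbhd \<Sigma> R (as ! l) = {})"
    unfolding good_def by blast
next
  assume "\<exists>as. distinct as \<and> set as = \<Sigma> \<and>
       (\<forall>k l. k < l \<and> l < length as \<longrightarrow>
          as ! k \<in> nbhd \<Sigma> R (as ! l) \<or>
          component R (set (take (Suc k) as)) (as ! k) \<inter> nbhd \<Sigma> R (as ! l) = {})"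
  then obtain as where g: "good \<Sigma> R as" unfolding good_def by blast
  show "chordal \<Sigma> R" unfolding chordal_def
  proof
    assume "\<exists>vs. induced_cycle \<Sigma> R vs"
    then obtain vs where "induced_cycle \<Sigma> R vs" by blast
    then show False using back_dir[OF g assms(4)] by blast
  qed
qed

end
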